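(* Let $C\ge 2$ be an integer and let $r>0$. Let $B_r(0)=\{\mathbf{h}\in\mathbb{R}^C:\|\mathbf{h}\|_2\le r\}$. Define $$H^*(r,C):=\min_{\mathbf{h}\in B_r(0)} H(\mathrm{softmax}(\mathbf{h})).$$ Then $$H^*(r,C) > \log\left(1+(C-1)\exp\left(-\sqrt{\tfrac{C}{C-1}}\,r\right)\right).$$ In particular, for every $\mathbf{h}\in B_r(0)$, $H(\mathrm{softmax}(\mathbf{h}))>\log\left(1+(C-1)\exp\left(-\sqrt{\tfrac{C}{C-1}}\,r\right)\right)$. *)

theory Defs
  imports "HOL-Analysis.Analysis"
begin

text \<open>Softmax of a logit vector in R^C, indices given by a finite type 'n with CARD('n) = C.\<close>
definition softmax :: "real ^ 'n::finite \<Rightarrow> real ^ 'n" where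
  "softmax h = (\<chi> i. exp (h $ i) / (\<Sum>j\<in>UNIV. exp (h $ j)))"

definition entropy :: "real ^ 'n::finite \<Rightarrow> real" where
  "entropy p = - (\<Sum>i\<in>UNIV. (if p $ i = 0 then 0 else p $ i * ln (p $ i)))"

text \<open>H*(r,C): minimum of the softmax entropy over the closed Euclidean ball of radius r
  (the minimum is attained by compactness, so it equals the infimum).\<close>
definition Hstar :: "real \<Rightarrow> 'n::finite itself \<Rightarrow> real" where
  "Hstar r _ = (INF h \<in> cball (0 :: real ^ 'n) r. entropy (softmax h))"

end

theory Submission
  imports Defs
begin

lemma amgm_exp:
  fixes x :: "'a \<Rightarrow> real"
  assumes "finite B" "B \<noteq> {}"
  shows "real (card B) * exp ((\<Sum>j\<in>B. x j) / real (card B)) \<le> (\<Sum>j\<in>B. exp (x j))"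
proof -
  define m where "m = (\<Sum>j\<in>B. x j) / real (card B)"
  have cpos: "real (card B) > 0" using assms by (simp add: card_gt_0_iff)
  have "\<And>j. exp m * (1 + (x j - m)) \<le> exp (x j)"
  proof -
    fix j
    have "exp m * (1 + (x j - m)) \<le> exp m * exp (x j - m)"
      by (intro mult_left_mono) (auto simp: exp_ge_add_one_self)
    also have "\<dots> = exp (x j)" by (simp add: exp_diff)
    finally show "exp m * (1 + (x j - m)) \<le> exp (x j)" .
  qed
  hence "(\<Sum>j\<in>B. exp m * (1 + (x j - m))) \<le> (\<Sum>j\<in>B. exp (x j))"
    by (intro sum_mono) auto
  moreover have "(\<Sum>j\<in>B. exp m * (1 + (x j - m))) = exp m * (real (card B) + (\<Sum>j\<in>B. x j) - real (card B) * m)"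
    by (simp add: sum_distrib_left[symmetric] sum.distrib sum_subtractf algebra_simps)
  moreover have "real (card B) * m = (\<Sum>j\<in>B. x j)" using cpos by (simp add: m_def)
  ultimately show ?thesis by (simp add: m_def algebra_simps)
qed

lemma quad_bound:
  fixes h :: "'a \<Rightarrow> real"
  assumes "finite A" "k \<in> A" "card A \<ge> 2"
  shows "(real (card A) * h k - (\<Sum>j\<in>A. h j))\<^sup>2
         \<le> real (card A) * (real (card A) - 1) * (\<Sum>j\<in>A. (h j)\<^sup>2)"
proof -
  define C where "C = real (card A)"
  define B where "B = A - {k}"
  have cB: "real (card B) = C - 1" using assms by (simp add: B_def C_def)
  define T where "T = (\<Sum>j\<in>B. h j)"
  define Q where "Q = (\<Sum>j\<in>B. (h j)\<^sup>2)"
  have S: "(\<Sum>j\<in>A. h j) = h k + T" unfolding T_def B_def using assms by (simp add: sum.remove)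
  have S2: "(\<Sum>j\<in>A. (h j)\<^sup>2) = (h k)\<^sup>2 + Q" unfolding Q_def B_def using assms by (simp add: sum.remove)
  have CS: "T\<^sup>2 \<le> (C - 1) * Q" using sum_squared_le_sum_of_squares[of h B] cB
    by (simp add: T_def Q_def mult.commute)
  have C2: "C \<ge> 2" using assms by (simp add: C_def)
  have "C * T\<^sup>2 \<le> C * ((C - 1) * Q)" using CS C2 by (intro mult_left_mono) auto
  moreover have "0 \<le> (C - 1) * (h k + T)\<^sup>2" using C2 by simp
  ultimately have "(C * h k - (h k + T))\<^sup>2 \<le> C * (C - 1) * ((h k)\<^sup>2 + Q)"
    by (simp add: power2_eq_square algebra_simps)
  thus ?thesis using S S2 by (simp add: C_def)
qed

lemma main_h:
  fixes h :: "real ^ 'n::finite" and r :: real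
  assumes C2: "CARD('n) \<ge> 2" and rpos: "r > 0" and hr: "norm h \<le> r"
  shows "entropy (softmax h) >
           ln (1 + (real CARD('n) - 1) * exp (- sqrt (real CARD('n) / (real CARD('n) - 1)) * r))"
proof -
  define C where "C = real CARD('n)"
  have C2': "C \<ge> 2" using C2 by (simp add: C_def)
  define Z where "Z = (\<Sum>j\<in>UNIV. exp (h $ j))"
  have Zpos: "Z > 0" unfolding Z_def by (intro sum_pos) auto
  define p where "p i = exp (h $ i) / Z" for i
  have pp: "p i > 0" for i using Zpos by (simp add: p_def)
  have sm: "softmax h $ i = p i" for i by (simp add: softmax_def p_def Z_def)
  have psum: "(\<Sum>i\<in>UNIV. p i) = 1" using Zpos
    by (simp add: p_def Z_def flip: sum_divide_distrib)
  have lnp: "ln (p i) = h $ i - ln Z" for i using Zpos by (simp add: p_def ln_div)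
  have E: "entropy (softmax h) = ln Z - (\<Sum>i\<in>UNIV. p i * h $ i)"
  proof -
    have "entropy (softmax h) = - (\<Sum>i\<in>UNIV. p i * h $ i - ln Z * p i)"
      unfolding entropy_def sm using pp by (intro arg_cong[where f=uminus] sum.cong) (auto simp: lnp algebra_simps)
    also have "\<dots> = ln Z * (\<Sum>i\<in>UNIV. p i) - (\<Sum>i\<in>UNIV. p i * h $ i)"
      by (simp add: sum_subtractf sum_distrib_left)
    finally show ?thesis using psum by simp
  qed
  obtain k where kmax: "\<And>j. h $ j \<le> h $ k"
  proof -
    have "Max (range (\<lambda>i. h $ i)) \<in> range (\<lambda>i. h $ i)" by (intro Max_in) auto
    then obtain k where "h $ k = Max (range (\<lambda>i. h $ i))" by (metis imageE)
    moreover have "h $ j \<le> Max (range (\<lambda>i. h $ i))" for j by (intro Max_ge) auto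
    ultimately show ?thesis using that by metis
  qed
  have wle: "(\<Sum>i\<in>UNIV. p i * h $ i) \<le> h $ k"
  proof -
    have "(\<Sum>i\<in>UNIV. p i * h $ i) \<le> (\<Sum>i\<in>UNIV. p i * h $ k)"
      using pp kmax by (intro sum_mono mult_left_mono) (auto intro: less_imp_le)
    also have "\<dots> = h $ k" using psum by (simp flip: sum_distrib_right)
    finally show ?thesis .
  qed
  define W where "W = (\<Sum>j\<in>UNIV. exp (h $ j - h $ k))"
  have ZW: "ln Z - h $ k = ln W"
  proof -
    have "W = Z / exp (h $ k)" by (simp add: W_def Z_def exp_diff sum_divide_distrib)
    thus ?thesis using Zpos by (simp add: ln_div)
  qed
  define B where "B = UNIV - {k}"
  have finB: "finite B" and cB: "real (card B) = C - 1" by (auto simp: B_def C_def)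
  have Bne: "B \<noteq> {}" using cB C2' by auto
  have W1: "W = 1 + (\<Sum>j\<in>B. exp (h $ j - h $ k))"
    unfolding W_def B_def by (simp add: sum.remove[of UNIV k])
  define S where "S = (\<Sum>j\<in>UNIV. h $ j)"
  define D where "D = C * h $ k - S"
  have sumB: "(\<Sum>j\<in>B. (h $ j - h $ k)) = - D"
  proof -
    have "S = h $ k + (\<Sum>j\<in>B. h $ j)" unfolding S_def B_def by (simp add: sum.remove[of UNIV k])
    thus ?thesis using cB by (simp add: D_def sum_subtractf algebra_simps) (metis distrib_left mult.commute mult.right_neutral)
  qed
  have am: "(C - 1) * exp (- D / (C - 1)) \<le> (\<Sum>j\<in>B. exp (h $ j - h $ k))"
    using amgm_exp[OF finB Bne, of "\<lambda>j. h $ j - h $ k"] sumB cB by simp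
  have Dnn: "D \<ge> 0"
  proof -
    have "S \<le> (\<Sum>j\<in>(UNIV::'n set). h $ k)" unfolding S_def using sum_mono[of "UNIV :: 'n set" "\<lambda>j. h $ j" "\<lambda>j. h $ k"] kmax by simp
    thus ?thesis by (simp add: D_def C_def)
  qed
  have q: "D\<^sup>2 \<le> C * (C - 1) * (\<Sum>j\<in>UNIV. (h $ j)\<^sup>2)"
    using quad_bound[of "UNIV :: 'n set" k "\<lambda>j. h $ j"] C2 by (simp add: D_def S_def C_def)
  have nh: "(\<Sum>j\<in>UNIV. (h $ j)\<^sup>2) = (norm h)\<^sup>2"
    by (simp add: norm_vec_def L2_set_def sum_nonneg)
  have "(norm h)\<^sup>2 \<le> r\<^sup>2" using hr by (intro power_mono) auto
  hence "C * (C - 1) * (norm h)\<^sup>2 \<le> C * (C - 1) * r\<^sup>2" using C2' by (intro mult_left_mono) auto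
  hence "D\<^sup>2 \<le> C * (C - 1) * r\<^sup>2" using q[unfolded nh] by linarith
  hence D2: "D\<^sup>2 / (C - 1)\<^sup>2 \<le> C * (C - 1) * r\<^sup>2 / (C - 1)\<^sup>2"
    using C2' by (intro divide_right_mono) auto
  have e1: "C * (C - 1) * r\<^sup>2 / (C - 1)\<^sup>2 = C / (C - 1) * r\<^sup>2"
  proof -
    have n: "C - 1 \<noteq> 0" using C2' by simp
    have "C * (C - 1) * r\<^sup>2 / (C - 1)\<^sup>2 = (C * r\<^sup>2) * (C - 1) / ((C - 1) * (C - 1))"
      by (simp add: power2_eq_square mult_ac)
    also have "\<dots> = C * r\<^sup>2 / (C - 1)" using n by simp
    finally show ?thesis by simp
  qed
  have e2: "(sqrt (C / (C - 1)) * r)\<^sup>2 = C / (C - 1) * r\<^sup>2"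
    using C2' by (simp add: power_mult_distrib)
  have "(D / (C - 1))\<^sup>2 \<le> (sqrt (C / (C - 1)) * r)\<^sup>2"
    using D2 unfolding e1 e2 power_divide .
  hence Db: "D / (C - 1) \<le> sqrt (C / (C - 1)) * r"
  proof (rule power2_le_imp_le)
    show "0 \<le> sqrt (C / (C - 1)) * r" using rpos C2' by (intro mult_nonneg_nonneg) auto
  qed
  define L where "L = 1 + (C - 1) * exp (- sqrt (C / (C - 1)) * r)"
  have WL: "L \<le> W"
  proof -
    have "exp (- sqrt (C / (C - 1)) * r) \<le> exp (- D / (C - 1))" using Db by simp
    hence "(C - 1) * exp (- sqrt (C / (C - 1)) * r) \<le> (C - 1) * exp (- D / (C - 1))"
      using C2' by (intro mult_left_mono) auto
    thus ?thesis using am W1 L_def by linarith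
  qed
  have "(C - 1) * exp (- sqrt (C / (C - 1)) * r) \<ge> 0" using C2' by simp
  hence Lpos: "L > 0" unfolding L_def by linarith
  have "ln Z - (\<Sum>i\<in>UNIV. p i * h $ i) > ln L"
  proof (cases "\<forall>j. h $ j = h $ k")
    case True
    have e: "exp (h $ j - h $ k) = 1" for j by (metis True diff_self exp_zero)
    have WC: "W = C" unfolding W_def C_def e by simp
    have ex1: "exp (- sqrt (C / (C - 1)) * r) < 1"
    proof -
      have "C / (C - 1) > 0" using C2' by simp
      hence "sqrt (C / (C - 1)) * r > 0" using rpos by simp
      thus ?thesis by simp
    qed
    have "(C - 1) * exp (- sqrt (C / (C - 1)) * r) < (C - 1) * 1"
      using C2' ex1 by (intro mult_strict_left_mono) auto
    hence "(C - 1) * exp (- sqrt (C / (C - 1)) * r) < C - 1" by (simp only: mult_1_right)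
    hence "L < W" unfolding WC L_def by linarith
    hence "ln L < ln W" using Lpos by simp
    thus ?thesis using wle ZW by linarith
  next
    case False
    then obtain j where "h $ j \<noteq> h $ k" by auto
    with kmax have j: "h $ j < h $ k" by (meson order_le_neq_trans)
    have "(\<Sum>i\<in>UNIV. p i * h $ i) < (\<Sum>i\<in>UNIV. p i * h $ k)"
      using pp kmax j by (intro sum_strict_mono_ex1) (auto intro: mult_left_mono less_imp_le)
    also have "\<dots> = h $ k" using psum by (simp flip: sum_distrib_right)
    finally have "ln Z - (\<Sum>i\<in>UNIV. p i * h $ i) > ln W" using ZW by linarith
    moreover have "ln L \<le> ln W" using WL Lpos by simp
    ultimately show ?thesis by linarith
  qed
  thus ?thesis unfolding E L_def C_def .
qed

lemma entropy_softmax_eq: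
  fixes h :: "real ^ 'n::finite"
  shows "entropy (softmax h) = - (\<Sum>i\<in>UNIV. (exp (h $ i) / (\<Sum>j\<in>UNIV. exp (h $ j))) *
            ln (exp (h $ i) / (\<Sum>j\<in>UNIV. exp (h $ j))))"
proof -
  have Zpos: "(\<Sum>j\<in>UNIV. exp (h $ j)) > 0" by (intro sum_pos) auto
  show ?thesis unfolding entropy_def softmax_def using Zpos by simp
qed

lemma cont_entropy_softmax:
  "continuous_on UNIV (\<lambda>h :: real ^ 'n::finite. entropy (softmax h))"
proof -
  have Zpos: "\<And>h :: real ^ 'n. (\<Sum>j\<in>UNIV. exp (h $ j)) > 0" by (intro sum_pos) auto
  show ?thesis unfolding entropy_softmax_eq
    by (intro continuous_intros) (use Zpos in \<open>auto simp: less_imp_neq[symmetric]\<close>)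
qed

theorem theorem1:
  fixes r :: real
  assumes "CARD('n::finite) \<ge> 2" and "r > 0"
  shows "Hstar r TYPE('n) >
           ln (1 + (real CARD('n) - 1) * exp (- sqrt (real CARD('n) / (real CARD('n) - 1)) * r))
       \<and> (\<forall>h :: real ^ 'n. norm h \<le> r \<longrightarrow>
           entropy (softmax h) >
           ln (1 + (real CARD('n) - 1) * exp (- sqrt (real CARD('n) / (real CARD('n) - 1)) * r)))"
proof
  let ?b = "ln (1 + (real CARD('n) - 1) * exp (- sqrt (real CARD('n) / (real CARD('n) - 1)) * r))"
  let ?f = "\<lambda>h :: real ^ 'n. entropy (softmax h)"
  let ?S = "cball (0 :: real ^ 'n) r"
  have ne: "?S \<noteq> {}" using assms(2) by auto
  have co: "continuous_on ?S ?f" using cont_entropy_softmax by (rule continuous_on_subset) auto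
  obtain x where x: "x \<in> ?S" and xmin: "\<And>y. y \<in> ?S \<Longrightarrow> ?f x \<le> ?f y"
    using continuous_attains_inf[OF compact_cball ne co] by blast
  have "?f x \<le> (INF h \<in> ?S. ?f h)" using ne xmin by (intro cINF_greatest) auto
  moreover have "?b < ?f x" using main_h[OF assms] x by simp
  ultimately show "Hstar r TYPE('n) > ?b" unfolding Hstar_def by linarith
  show "\<forall>h :: real ^ 'n. norm h \<le> r \<longrightarrow> ?f h > ?b" using main_h[OF assms] by blast
qed

end
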